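(* Let $n_u, K, C, I$ be positive integers. For each $c\in\{1,\dots,C\}$, each $k\in\{1,\dots,K\}$ and each $i\in\{0,1,\dots,I\}$, let $\hat{\Sigma}^{i,c}_k$ be a symmetric positive definite $n_u\times n_u$ real matrix written as $\hat{\Sigma}^{i,c}_k=(\hat{\Sigma}^{\frac12,i,c}_k)^\top \hat{\Sigma}^{\frac12,i,c}_k$ for some square-root factor $\hat{\Sigma}^{\frac12,i,c}_k\in\mathbb{R}^{n_u\times n_u}$. Set $\hat{\sigma}^{i,c}_k=\operatorname{vec}(\hat{\Sigma}^{\frac12,i,c}_k)\in\mathbb{R}^{n_u^2}$ and $\hat{\sigma}^{i,c}=\operatorname{col}(\hat{\sigma}^{i,c}_1,\dots,\hat{\sigma}^{i,c}_K)\in\mathbb{R}^{n_u^2K}$. Assume that for every $c$ and every $i\in\{0,\dots,I-1\}$ the update $$\hat{\sigma}^{i+1,c}=\mathcal{I}^{i,c}_\Sigma\,\hat{\sigma}^{i,c}$$ holds, where $\mathcal{I}^{i,c}_\Sigma$ is a symmetric $n_u^2K\times n_u^2K$ matrix satisfying $0\le \mathcal{I}^{i,c}_\Sigma\le \mathbf{I}$ in the positive semidefinite (Loewner) order. For each $k$ define $$\Sigma^L_k=\left(\frac{1}{C}\sum_{c=1}^C\big(\operatorname{diag}(\sigma(\hat{\Sigma}^{I,c}_k))\big)^{-1}\right)^{-1},$$ where $\sigma(\hat{\Sigma}^{I,c}_k)$ denotes the vector of the $n_u$ eigenvalues of $\hat{\Sigma}^{I,c}_k$ and $\operatorname{diag}(\cdot)$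 the diagonal matrix with that vector on its diagonal. Then $$\sum_{k=1}^K \operatorname{Tr}\big((\Sigma^L_k)^{-1}\big)\;\ge\;\frac{n_u^2K^2}{C}\sum_{c=1}^C\left(\sum_{k=1}^K\operatorname{Tr}\hat{\Sigma}^{0,c}_k\right)^{-1}.$$
   Context: Here $\operatorname{vec}(\cdot)$ stacks the columns of a matrix into a single vector, $\operatorname{col}(\cdot)$ denotes vertical concatenation of vectors, and $\mathbf{I}$ is the identity matrix. In the paper, $\hat{\Sigma}^{i,c}_k$ is the covariance of a time-varying linear Gaussian control policy $\mathcal{N}(\hat F^{i,c}_k x_k+\hat e^{i,c}_k,\hat{\Sigma}^{i,c}_k)$ at time step $k$ of an episode of length $K$, obtained at iteration $i$ of an expectation-maximization procedure started from the $c$-th of $C$ initial-state distributions, with control dimension $n_u$; $\mathcal{I}^{i,c}_\Sigma$ is the principal block (corresponding to the covariance parameters) of the EM information matrix, and $\Sigma^L_k$ is the covariance of the learned global (neural-network) Gaussian policy at time step $k$. *)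

theory Defs
  imports "HOL-Analysis.Analysis"
begin

definition sym_mat :: "real^'n^'n \<Rightarrow> bool" where
  "sym_mat A \<longleftrightarrow> transpose A = A"

definition pos_def :: "real^'n^'n \<Rightarrow> bool" where
  "pos_def A \<longleftrightarrow> sym_mat A \<and> (\<forall>x. x \<noteq> 0 \<longrightarrow> x \<bullet> (A *v x) > 0)"

definition pos_semidef :: "real^'n^'n \<Rightarrow> bool" where
  "pos_semidef A \<longleftrightarrow> sym_mat A \<and> (\<forall>x. x \<bullet> (A *v x) \<ge> 0)"

definition loewner_le :: "real^'n^'n \<Rightarrow> real^'n^'n \<Rightarrow> bool" where
  "loewner_le A B \<longleftrightarrow> pos_semidef (B - A)"

text \<open>v lists the eigenvalues of A with algebraic multiplicity, i.e. the
  characteristic polynomial det(x I - A) factors as the product of (x - v_j).\<close>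
definition eigenvalue_vector :: "real^'n^'n \<Rightarrow> real^'n \<Rightarrow> bool" where
  "eigenvalue_vector A v \<longleftrightarrow> (\<forall>x::real. det (x *\<^sub>R mat 1 - A) = (\<Prod>j\<in>UNIV. x - v $ j))"

definition diagm :: "real^'n \<Rightarrow> real^'n^'n" where
  "diagm v = (\<chi> i j. if i = j then v $ i else 0)"

text \<open>Column-stacking vectorisation: entry (col, row) is A_{row,col}.\<close>
definition vecm :: "real^'n^'n \<Rightarrow> real^('n \<times> 'n)" where
  "vecm A = (\<chi> p. A $ snd p $ fst p)"

definition colv :: "('k::finite \<Rightarrow> real^'m::finite) \<Rightarrow> real^('k \<times> 'm)" where
  "colv v = (\<chi> p. v (fst p) $ snd p)"

end

theory Submission
  imports Defs
begin

definition plt :: "nat \<Rightarrow> (real \<Rightarrow> real) \<Rightarrow> bool" where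
  "plt d f \<longleftrightarrow> (\<exists>c. \<forall>x. f x = (\<Sum>i<d. c i * x^i))"

lemma plt_mono: assumes "plt d f" "d \<le> e" shows "plt e f"
proof -
  obtain c where c: "\<And>x. f x = (\<Sum>i<d. c i * x^i)" using assms(1) by (auto simp: plt_def)
  have "f x = (\<Sum>i<e. (if i < d then c i else 0) * x^i)" for x
  proof -
    have "(\<Sum>i<e. (if i < d then c i else 0) * x^i) = (\<Sum>i<d. (if i < d then c i else 0) * x^i)"
      by (rule sum.mono_neutral_right) (use assms(2) in auto)
    then show ?thesis by (simp add: c)
  qed
  then show ?thesis unfolding plt_def by (intro exI[of _ "\<lambda>i. if i < d then c i else 0"]) blast
qed

lemma plt_add: assumes "plt d f" "plt d g" shows "plt d (\<lambda>x. f x + g x)"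
proof -
  obtain c where c: "\<And>x. f x = (\<Sum>i<d. c i * x^i)" using assms(1) by (auto simp: plt_def)
  obtain e where e: "\<And>x. g x = (\<Sum>i<d. e i * x^i)" using assms(2) by (auto simp: plt_def)
  have "f x + g x = (\<Sum>i<d. (c i + e i) * x^i)" for x
    by (simp add: c e distrib_right sum.distrib)
  then show ?thesis unfolding plt_def by (intro exI[of _ "\<lambda>i. c i + e i"]) blast
qed

lemma plt_scale: assumes "plt d f" shows "plt d (\<lambda>x. r * f x)"
proof -
  obtain c where c: "\<And>x. f x = (\<Sum>i<d. c i * x^i)" using assms by (auto simp: plt_def)
  have "r * f x = (\<Sum>i<d. (r * c i) * x^i)" for x by (simp add: c sum_distrib_left mult.assoc)
  then show ?thesis unfolding plt_def by (intro exI[of _ "\<lambda>i. r * c i"]) blast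
qed

lemma plt_diff: "plt d f \<Longrightarrow> plt d g \<Longrightarrow> plt d (\<lambda>x. f x - g x)"
  using plt_add[of d f "\<lambda>x. (-1) * g x"] plt_scale[of d g "-1"] by simp

lemma plt_zero: "plt d (\<lambda>x. 0)"
  unfolding plt_def by (rule exI[of _ "\<lambda>i. 0"]) simp

lemma plt_mono_monom: "plt (Suc k) (\<lambda>x. r * x^k)"
  unfolding plt_def
  by (rule exI[of _ "\<lambda>i. if i = k then r else 0"]) (simp add: if_distrib if_distribR sum.delta cong: if_cong)

lemma plt_const: "plt 1 (\<lambda>x. r)"
  using plt_mono_monom[of 0 r] by simp

lemma plt_shift: assumes "plt d f" shows "plt (Suc d) (\<lambda>x. x * f x)"
proof -
  obtain c where c: "\<And>x. f x = (\<Sum>i<d. c i * x^i)" using assms by (auto simp: plt_def)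
  have "x * f x = (\<Sum>i<Suc d. (if i = 0 then 0 else c (i - 1)) * x^i)" for x
    by (simp only: sum.lessThan_Suc_shift) (simp add: c sum_distrib_left algebra_simps)
  then show ?thesis unfolding plt_def by (intro exI[of _ "\<lambda>i. if i = 0 then 0 else c (i - 1)"]) blast
qed

lemma plt_sum: "finite S \<Longrightarrow> (\<And>p. p \<in> S \<Longrightarrow> plt d (f p)) \<Longrightarrow> plt d (\<lambda>x. \<Sum>p\<in>S. f p x)"
  by (induction S rule: finite_induct) (auto intro: plt_zero plt_add)

lemma prod_lin:
  fixes a :: "'i \<Rightarrow> real"
  assumes "finite S" "S \<noteq> {}"
  shows "\<exists>Q. plt (card S - 1) Q \<and>
     (\<forall>x. (\<Prod>i\<in>S. x - a i) = x^card S - sum a S * x^(card S - 1) + Q x)"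
  using assms
proof (induction S rule: finite_ne_induct)
  case (singleton y)
  show ?case by (rule exI[of _ "\<lambda>x. 0"]) (simp add: plt_zero)
next
  case (insert b F)
  obtain Q where Q: "plt (card F - 1) Q" and e: "\<And>x. (\<Prod>i\<in>F. x - a i) = x^card F - sum a F * x^(card F - 1) + Q x"
    using insert.IH by blast
  obtain k where k: "card F = Suc k" using insert by (cases "card F") auto
  define Q' where "Q' x = a b * sum a F * x^k + x * Q x - a b * Q x" for x
  have "plt (Suc k) Q'"
    unfolding Q'_def
  proof (intro plt_diff plt_add)
    show "plt (Suc k) (\<lambda>x. a b * sum a F * x ^ k)" by (rule plt_mono_monom)
    show "plt (Suc k) (\<lambda>x. x * Q x)" using plt_shift[OF Q] k by simp
    show "plt (Suc k) (\<lambda>x. a b * Q x)" using plt_mono[OF plt_scale[OF Q]] k by simp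
  qed
  moreover have "(\<Prod>i\<in>insert b F. x - a i) = x^card (insert b F) - sum a (insert b F) * x^(card (insert b F) - 1) + Q' x" for x
    using insert by (simp add: e k Q'_def algebra_simps)
  ultimately show ?case using insert k by auto
qed

lemma plt_prod_perm:
  fixes A :: "real^'n^'n"
  assumes "finite S"
  shows "plt (card {i\<in>S. p i = i} + 1) (\<lambda>x. \<Prod>i\<in>S. (if i = p i then x else 0) - A$i$p i)"
  using assms
proof (induction S rule: finite_induct)
  case empty
  then show ?case using plt_const[of 1] by simp
next
  case (insert j F)
  let ?f = "\<lambda>x. \<Prod>i\<in>F. (if i = p i then x else 0) - A$i$p i"
  show ?case
  proof (cases "p j = j")
    case True
    then have c: "card {i\<in>insert j F. p i = i} = Suc (card {i\<in>F. p i = i})"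
    proof -
      have "{i\<in>insert j F. p i = i} = insert j {i\<in>F. p i = i}" using True by auto
      then show ?thesis using insert by simp
    qed
    have "plt (card {i\<in>F. p i = i} + 2) (\<lambda>x. x * ?f x - A$j$j * ?f x)"
      using plt_diff[OF plt_shift[OF insert.IH] plt_mono[OF plt_scale[OF insert.IH]]] by simp
    then show ?thesis using insert True c by (simp add: algebra_simps)
  next
    case False
    then have c: "{i\<in>insert j F. p i = i} = {i\<in>F. p i = i}" by auto
    have "plt (card {i\<in>F. p i = i} + 1) (\<lambda>x. (- A$j$p j) * ?f x)"
      by (rule plt_scale[OF insert.IH])
    then show ?thesis using insert False c by (simp add: eq_commute[of j])
  qed
qed


lemma two_moved:
  assumes "p permutes (UNIV::'n::finite set)" "p \<noteq> id"
  shows "card {i. p i = i} + 2 \<le> CARD('n)"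
proof -
  obtain i where i: "p i \<noteq> i" using assms(2) by (auto simp: fun_eq_iff)
  define j where "j = p i"
  have ij: "i \<noteq> j" using i j_def by auto
  have pj: "p j \<noteq> j"
  proof
    assume "p j = j"
    then have "p j = p i" using j_def by simp
    then have "j = i" using permutes_inj[OF assms(1)] by (auto dest: injD)
    then show False using ij by simp
  qed
  have sub: "{i. p i = i} \<subseteq> UNIV - {i, j}" using i pj by auto
  have "card {i. p i = i} \<le> card (UNIV - {i, j})" by (rule card_mono[OF _ sub]) simp
  also have "\<dots> = CARD('n) - 2" using ij by (simp add: card_Diff_subset)
  finally have "card {i. p i = i} \<le> CARD('n) - 2" .
  moreover have "2 \<le> CARD('n)"
  proof -
    have "card {i, j} \<le> CARD('n)" by (rule card_mono) auto
    then show ?thesis using ij by simp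
  qed
  ultimately show ?thesis by linarith
qed

lemma eig_sum:
  assumes ev: "eigenvalue_vector (A::real^'n^'n) v"
  shows "sum (\<lambda>j. v$j) UNIV = trace A"
proof -
  define n where "n = CARD('n)"
  have n1: "n \<ge> 1" by (simp add: n_def Suc_le_eq)
  let ?P = "{p. p permutes (UNIV::'n set)}"
  let ?t = "\<lambda>p x. of_int (sign p) * (\<Prod>i\<in>UNIV. (if i = p i then x else 0) - A$i$p i)"
  have idP: "id \<in> ?P" by (simp add: permutes_id)
  have finP: "finite ?P" by (simp add: finite_permutations)
  have detx: "det (x *\<^sub>R mat 1 - A) = (\<Sum>p\<in>?P. ?t p x)" for x
    unfolding det_def by (intro sum.cong refl arg_cong2[where f="(*)"] prod.cong) (auto simp: mat_def)
  have R: "plt (n - 1) (\<lambda>x. \<Sum>p\<in>?P - {id}. ?t p x)"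
  proof (rule plt_sum)
    fix p assume "p \<in> ?P - {id}"
    then have pp: "p permutes UNIV" "p \<noteq> id" by auto
    have "plt (card {i\<in>UNIV. p i = i} + 1) (\<lambda>x. \<Prod>i\<in>UNIV. (if i = p i then x else 0) - A$i$p i)"
      by (rule plt_prod_perm) simp
    then show "plt (n - 1) (?t p)"
      by (rule plt_mono[OF plt_scale]) (use two_moved[OF pp] in \<open>simp add: n_def\<close>)
  qed simp
  have split: "(\<Sum>p\<in>?P. ?t p x) = ?t id x + (\<Sum>p\<in>?P - {id}. ?t p x)" for x
    by (rule sum.remove[OF finP idP])
  have tid: "?t id x = (\<Prod>i\<in>UNIV. x - A$i$i)" for x by (simp add: sign_id)
  obtain Q1 where Q1: "plt (n - 1) Q1"
    and e1: "\<And>x. (\<Prod>i\<in>UNIV. x - A$i$i) = x^n - trace A * x^(n - 1) + Q1 x"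
    using prod_lin[of "UNIV::'n set" "\<lambda>i. A$i$i"] by (auto simp: n_def trace_def)
  obtain Q2 where Q2: "plt (n - 1) Q2"
    and e2: "\<And>x. (\<Prod>j\<in>UNIV. x - v$j) = x^n - sum (\<lambda>j. v$j) UNIV * x^(n - 1) + Q2 x"
    using prod_lin[of "UNIV::'n set" "\<lambda>j. v$j"] by (auto simp: n_def)
  define D where "D x = Q1 x + (\<Sum>p\<in>?P - {id}. ?t p x) - Q2 x" for x
  have "plt (n - 1) D" unfolding D_def by (intro plt_diff plt_add Q1 Q2 R)
  then obtain c where c: "\<And>x. D x = (\<Sum>i<n - 1. c i * x^i)" by (auto simp: plt_def)
  define s where "s = sum (\<lambda>j. v$j) UNIV - trace A"
  have key: "s * x^(n - 1) + D x = 0" for x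
  proof -
    have "det (x *\<^sub>R mat 1 - A) = (\<Prod>j\<in>UNIV. x - v$j)" using ev by (simp add: eigenvalue_vector_def)
    then have "x^n - trace A * x^(n - 1) + Q1 x + (\<Sum>p\<in>?P - {id}. ?t p x)
        = x^n - sum (\<lambda>j. v$j) UNIV * x^(n - 1) + Q2 x"
      by (simp only: detx split tid e1 e2)
    then show ?thesis by (simp add: D_def s_def algebra_simps)
  qed
  define e where "e i = (if i = n - 1 then s else c i)" for i
  have "(\<Sum>i\<le>n - 1. e i * x^i) = 0" for x
  proof -
    have "(\<Sum>i\<le>n - 1. e i * x^i) = (\<Sum>i<n - 1. e i * x^i) + e (n - 1) * x^(n - 1)"
      by (simp add: lessThan_Suc_atMost[symmetric])
    also have "(\<Sum>i<n - 1. e i * x^i) = (\<Sum>i<n - 1. c i * x^i)"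
      by (rule sum.cong) (auto simp: e_def)
    finally show ?thesis using key[of x] c[of x] by (simp add: e_def algebra_simps)
  qed
  then have "e (n - 1) = 0" using polyfun_eq_0[of e "n - 1"] by blast
  then show ?thesis by (simp add: e_def s_def)
qed


lemma eig_pos:
  assumes pd: "pos_def (A::real^'n^'n)" and ev: "eigenvalue_vector A v"
  shows "v$j > 0"
proof -
  let ?M = "v$j *\<^sub>R mat 1 - A"
  have "det ?M = (\<Prod>i\<in>UNIV. v$j - v$i)" using ev by (simp add: eigenvalue_vector_def)
  also have "\<dots> = 0" by (rule prod_zero) auto
  finally have "\<not> invertible ?M" by (simp add: invertible_det_nz)
  then obtain x where x: "?M *v x = 0" "x \<noteq> 0"
    unfolding invertible_left_inverse matrix_left_invertible_ker by blast
  have "?M *v x = v$j *\<^sub>R x - A *v x"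
    by (simp add: matrix_vector_mult_diff_rdistrib scaleR_matrix_vector_assoc[symmetric])
  with x have Ax: "A *v x = v$j *\<^sub>R x" by simp
  have "x \<bullet> (A *v x) > 0" using pd x(2) by (simp add: pos_def_def)
  then have "v$j * (x \<bullet> x) > 0" by (simp add: Ax)
  moreover have "x \<bullet> x > 0" using x(2) by simp
  ultimately show ?thesis by (simp add: zero_less_mult_iff)
qed

lemma quad_nonneg:
  fixes a b c :: real
  assumes "\<And>t. a + 2*b*t + c*t^2 \<ge> 0" "c \<ge> 0"
  shows "b^2 \<le> a * c"
proof (cases "c = 0")
  case True
  show ?thesis
  proof (cases "b = 0")
    case False
    have "a + 2*b*(-(a+1)/(2*b)) + c*(-(a+1)/(2*b))^2 \<ge> 0" by (rule assms(1))
    with True False show ?thesis by (simp add: field_simps)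
  qed (simp add: True)
next
  case False
  then have cp: "c > 0" using assms(2) by simp
  have "a + 2*b*(-b/c) + c*(-b/c)^2 \<ge> 0" by (rule assms(1))
  then have "a - b^2/c \<ge> 0" using cp by (simp add: field_simps power2_eq_square)
  then show ?thesis using cp by (simp add: field_simps)
qed

lemma sym_inner:
  assumes "sym_mat (B::real^'m^'m)"
  shows "y \<bullet> (B *v x) = x \<bullet> (B *v y)"
proof -
  have "y \<bullet> (B *v x) = (y v* B) \<bullet> x" by (simp add: dot_lmul_matrix)
  also have "y v* B = transpose B *v y" by simp
  also have "\<dots> = B *v y" using assms by (simp add: sym_mat_def)
  finally show ?thesis by (simp add: inner_commute)
qed

lemma psd_cs:
  assumes s: "sym_mat (B::real^'m^'m)" and p: "\<And>z. z \<bullet> (B *v z) \<ge> 0"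
  shows "(y \<bullet> (B *v x))^2 \<le> (x \<bullet> (B *v x)) * (y \<bullet> (B *v y))"
proof (rule quad_nonneg)
  fix t :: real
  have "0 \<le> (x + t *\<^sub>R y) \<bullet> (B *v (x + t *\<^sub>R y))" by (rule p)
  also have "\<dots> = x \<bullet> (B *v x) + t * (x \<bullet> (B *v y)) + t * (y \<bullet> (B *v x)) + t*t*(y \<bullet> (B *v y))"
    by (simp add: matrix_vector_right_distrib matrix_vector_mult_scaleR inner_add_left inner_add_right algebra_simps)
  also have "\<dots> = x \<bullet> (B *v x) + 2 * (y \<bullet> (B *v x)) * t + (y \<bullet> (B *v y)) * t^2"
    using sym_inner[OF s, of y x] by (simp add: power2_eq_square algebra_simps)
  finally show "0 \<le> x \<bullet> (B *v x) + 2 * (y \<bullet> (B *v x)) * t + (y \<bullet> (B *v y)) * t^2" .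
qed (rule p)

lemma contraction:
  assumes s: "sym_mat (A::real^'m^'m)" and g0: "loewner_le 0 A" and l1: "loewner_le A (mat 1)"
  shows "(A *v x) \<bullet> (A *v x) \<le> x \<bullet> x"
proof -
  have p: "\<And>z. z \<bullet> (A *v z) \<ge> 0" using g0 by (simp add: loewner_le_def pos_semidef_def)
  have q: "\<And>z. z \<bullet> (A *v z) \<le> z \<bullet> z"
  proof -
    fix z :: "real^'m"
    have "0 \<le> z \<bullet> ((mat 1 - A) *v z)" using l1 by (simp add: loewner_le_def pos_semidef_def)
    also have "\<dots> = z \<bullet> z - z \<bullet> (A *v z)"
      by (simp add: matrix_vector_mult_diff_rdistrib inner_diff_right)
    finally show "z \<bullet> (A *v z) \<le> z \<bullet> z" by simp
  qed
  let ?y = "A *v x"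
  let ?N = "?y \<bullet> ?y"
  have "?N^2 \<le> (x \<bullet> (A *v x)) * (?y \<bullet> (A *v ?y))"
    using psd_cs[OF s p, of ?y x] by simp
  also have "\<dots> \<le> (x \<bullet> x) * ?N"
    by (rule mult_mono[OF q q]) (auto simp: p)
  finally have h: "?N^2 \<le> (x \<bullet> x) * ?N" .
  show ?thesis
  proof (cases "?N = 0")
    case True then show ?thesis by simp
  next
    case False
    then have "?N > 0" by simp
    with h show ?thesis by (simp add: power2_eq_square)
  qed
qed

lemma trace_sq: "trace (transpose S ** S) = vecm (S::real^'n^'n) \<bullet> vecm S"
  unfolding trace_def matrix_matrix_mult_def transpose_def inner_vec_def vecm_def
  by (simp add: UNIV_Times_UNIV[symmetric] sum.cartesian_product case_prod_beta del: UNIV_Times_UNIV)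

lemma colv_inner: "colv v \<bullet> colv v = (\<Sum>k\<in>UNIV. v k \<bullet> v k)"
  unfolding inner_vec_def colv_def
  by (simp add: UNIV_Times_UNIV[symmetric] sum.cartesian_product case_prod_beta del: UNIV_Times_UNIV)

lemma matrix_inv_eq:
  fixes A B :: "real^'n^'n"
  assumes "A ** B = mat 1" "B ** A = mat 1"
  shows "matrix_inv A = B"
proof -
  let ?P = "\<lambda>A'. A ** A' = mat 1 \<and> A' ** A = mat 1"
  have "?P (matrix_inv A)" unfolding matrix_inv_def by (rule someI[of ?P B]) (use assms in auto)
  then have "matrix_inv A = matrix_inv A ** (A ** B)" using assms by (simp add: matrix_mul_rid)
  also have "\<dots> = (matrix_inv A ** A) ** B" by (simp add: matrix_mul_assoc)
  also have "\<dots> = B" using \<open>?P (matrix_inv A)\<close> by (simp add: matrix_mul_lid)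
  finally show ?thesis .
qed

lemma diagm_mult: "diagm a ** diagm b = diagm (\<chi> i. a$i * b$i)"
proof -
  have "(\<Sum>k\<in>UNIV. (if i = k then a$i else 0) * (if k = j then b$k else 0))
        = (if i = j then a$i * b$i else 0)" for i j
  proof -
    have "(\<Sum>k\<in>UNIV. (if i = k then a$i else 0) * (if k = j then b$k else 0))
        = (\<Sum>k\<in>UNIV. if k = i then (if i = j then a$i * b$i else 0) else 0)"
      by (rule sum.cong) auto
    also have "\<dots> = (if i = j then a$i * b$i else 0)" by simp
    finally show ?thesis by simp
  qed
  then show ?thesis unfolding diagm_def matrix_matrix_mult_def by (simp add: vec_eq_iff)
qed

lemma diagm_one: "(\<forall>i. a$i = 1) \<Longrightarrow> diagm a = mat 1"
  by (simp add: diagm_def mat_def vec_eq_iff)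

lemma matrix_inv_diagm:
  assumes "\<And>i. a$i \<noteq> 0"
  shows "matrix_inv (diagm a) = diagm (\<chi> i. inverse (a$i))"
  by (rule matrix_inv_eq) (simp_all add: diagm_mult diagm_one assms)

lemma sum_diagm: "(\<Sum>c\<in>S. diagm (f c)) = diagm (\<Sum>c\<in>S. f c)"
  by (induction S rule: infinite_finite_induct) (auto simp: diagm_def vec_eq_iff)

lemma scale_diagm: "r *\<^sub>R diagm a = diagm (r *\<^sub>R a)"
  by (auto simp: diagm_def vec_eq_iff)

lemma trace_diagm: "trace (diagm a) = sum (\<lambda>i. a$i) UNIV"
  by (simp add: trace_def diagm_def)

lemma am_hm:
  fixes a :: "'i \<Rightarrow> real"
  assumes "finite S" "\<And>x. x \<in> S \<Longrightarrow> a x > 0"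
  shows "real (card S)^2 \<le> sum a S * (\<Sum>x\<in>S. 1 / a x)"
proof -
  have t: "a x / a y + a y / a x \<ge> 2" if "x \<in> S" "y \<in> S" for x y
  proof -
    have px: "a x > 0" and py: "a y > 0" using assms that by auto
    have "0 \<le> (a x - a y)^2" by simp
    then have "2 * (a x * a y) \<le> a x * a x + a y * a y" by (simp add: power2_eq_square algebra_simps)
    then show ?thesis using px py by (simp add: field_simps)
  qed
  have P: "sum a S * (\<Sum>x\<in>S. 1 / a x) = (\<Sum>x\<in>S. \<Sum>y\<in>S. a x / a y)"
    by (simp add: sum_product)
  have Sw: "(\<Sum>y\<in>S. \<Sum>x\<in>S. a x / a y) = (\<Sum>x\<in>S. \<Sum>y\<in>S. a x / a y)"
    by (rule sum.swap)
  have "2 * (sum a S * (\<Sum>x\<in>S. 1 / a x)) = (\<Sum>x\<in>S. \<Sum>y\<in>S. a x / a y) + (\<Sum>y\<in>S. \<Sum>x\<in>S. a x / a y)"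
    by (simp only: P Sw mult_2)
  also have "\<dots> = (\<Sum>x\<in>S. \<Sum>y\<in>S. a x / a y + a y / a x)"
    by (simp only: sum.distrib)
  also have "\<dots> \<ge> (\<Sum>x\<in>S. \<Sum>y\<in>S. 2)"
    by (intro sum_mono t) auto
  finally show ?thesis by (simp add: power2_eq_square)
qed


theorem theorem1:
  fixes Sig Shalf :: "nat \<Rightarrow> 'c::finite \<Rightarrow> 'k::finite \<Rightarrow> real^'n::finite^'n"
    and Info :: "nat \<Rightarrow> 'c \<Rightarrow> real^('k \<times> 'n \<times> 'n)^('k \<times> 'n \<times> 'n)"
    and lam :: "'c \<Rightarrow> 'k \<Rightarrow> real^'n"
    and I :: nat
  assumes I_pos: "I \<ge> 1"
    and Sig_pd: "\<And>i c k. i \<le> I \<Longrightarrow> pos_def (Sig i c k)"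
    and Sig_sqrt: "\<And>i c k. i \<le> I \<Longrightarrow> Sig i c k = transpose (Shalf i c k) ** Shalf i c k"
    and Info_sym: "\<And>i c. i < I \<Longrightarrow> sym_mat (Info i c)"
    and Info_ge0: "\<And>i c. i < I \<Longrightarrow> loewner_le 0 (Info i c)"
    and Info_le1: "\<And>i c. i < I \<Longrightarrow> loewner_le (Info i c) (mat 1)"
    and update: "\<And>i c. i < I \<Longrightarrow>
        colv (\<lambda>k. vecm (Shalf (Suc i) c k)) = Info i c *v colv (\<lambda>k. vecm (Shalf i c k))"
    and lam_eig: "\<And>c k. eigenvalue_vector (Sig I c k) (lam c k)"
  shows "(\<Sum>k\<in>UNIV. trace (matrix_inv
            (matrix_inv ((1 / real CARD('c)) *\<^sub>R (\<Sum>c\<in>UNIV. matrix_inv (diagm (lam c k)))))))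
         \<ge> real (CARD('n))^2 * real (CARD('k))^2 / real CARD('c) *
            (\<Sum>c\<in>UNIV. inverse (\<Sum>k\<in>UNIV. trace (Sig 0 c k)))"
proof -
  let ?C = "real CARD('c)"
  have Cpos: "?C > 0" by simp
  have pos: "\<And>c k j. lam c k $ j > 0"
    using eig_pos[OF Sig_pd lam_eig] by simp
  have sumlam: "\<And>c k. (\<Sum>j\<in>UNIV. lam c k $ j) = trace (Sig I c k)"
    using eig_sum[OF lam_eig] by simp
  define s where "s i c = colv (\<lambda>k. vecm (Shalf i c k))" for i c
  have trs: "(\<Sum>k\<in>UNIV. trace (Sig i c k)) = s i c \<bullet> s i c" if "i \<le> I" for i c
    using that by (simp add: s_def Sig_sqrt trace_sq colv_inner)
  have dec: "i \<le> I \<Longrightarrow> s i c \<bullet> s i c \<le> s 0 c \<bullet> s 0 c" for i c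
  proof (induction i)
    case (Suc i)
    then have iI: "i < I" by simp
    have "s (Suc i) c = Info i c *v s i c" using update[OF iI] by (simp add: s_def)
    then have "s (Suc i) c \<bullet> s (Suc i) c \<le> s i c \<bullet> s i c"
      using contraction[OF Info_sym[OF iI] Info_ge0[OF iI] Info_le1[OF iI]] by simp
    with Suc show ?case by simp
  qed simp
  define T where "T c = (\<Sum>p\<in>UNIV. 1 / lam c (fst p) $ snd p)" for c
  define T0 where "T0 c = (\<Sum>k\<in>UNIV. trace (Sig 0 c k))" for c
  have LHS: "(\<Sum>k\<in>UNIV. trace (matrix_inv
            (matrix_inv ((1 / ?C) *\<^sub>R (\<Sum>c\<in>UNIV. matrix_inv (diagm (lam c k)))))))
        = (1 / ?C) * (\<Sum>c\<in>UNIV. T c)"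
  proof -
    have k: "trace (matrix_inv
            (matrix_inv ((1 / ?C) *\<^sub>R (\<Sum>c\<in>UNIV. matrix_inv (diagm (lam c k))))))
          = (1 / ?C) * (\<Sum>c\<in>UNIV. \<Sum>j\<in>UNIV. 1 / lam c k $ j)" for k
    proof -
      define w where "w = (1 / ?C) *\<^sub>R (\<Sum>c\<in>UNIV. (\<chi> j. inverse (lam c k $ j)))"
      have e1: "(1 / ?C) *\<^sub>R (\<Sum>c\<in>UNIV. matrix_inv (diagm (lam c k))) = diagm w"
        using pos by (simp add: matrix_inv_diagm less_imp_neq[symmetric] sum_diagm scale_diagm w_def)
      have wpos: "w $ j > 0" for j
      proof -
        have "(\<Sum>c\<in>UNIV. inverse (lam c k $ j)) > 0"
          by (rule sum_pos) (auto intro: pos)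
        then show ?thesis by (simp add: w_def sum_component)
      qed
      have "matrix_inv (matrix_inv (diagm w)) = diagm w"
        using wpos by (simp add: matrix_inv_diagm less_imp_neq[symmetric] vec_eq_iff)
      then have "trace (matrix_inv (matrix_inv (diagm w))) = (\<Sum>j\<in>UNIV. w $ j)"
        by (simp add: trace_diagm)
      also have "\<dots> = (\<Sum>j\<in>UNIV. (1 / ?C) * (\<Sum>c\<in>UNIV. 1 / lam c k $ j))"
        by (simp add: w_def sum_component divide_inverse)
      also have "\<dots> = (1 / ?C) * (\<Sum>j\<in>UNIV. \<Sum>c\<in>UNIV. 1 / lam c k $ j)"
        by (simp only: sum_distrib_left)
      also have "\<dots> = (1 / ?C) * (\<Sum>c\<in>UNIV. \<Sum>j\<in>UNIV. 1 / lam c k $ j)"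
        by (simp only: sum.swap[of _ "UNIV::'n set" "UNIV::'c set"])
      finally show ?thesis using e1 by simp
    qed
    have Tc: "T c = (\<Sum>k\<in>UNIV. \<Sum>j\<in>UNIV. 1 / lam c k $ j)" for c
    proof -
      have "(\<Sum>k\<in>UNIV. \<Sum>j\<in>UNIV. 1 / lam c k $ j) = (\<Sum>p\<in>UNIV \<times> UNIV. 1 / lam c (fst p) $ snd p)"
        unfolding sum.cartesian_product by (rule sum.cong) auto
      then show ?thesis by (simp only: T_def UNIV_Times_UNIV)
    qed
    have "(\<Sum>k\<in>UNIV. trace (matrix_inv
            (matrix_inv ((1 / ?C) *\<^sub>R (\<Sum>c\<in>UNIV. matrix_inv (diagm (lam c k)))))))
        = (\<Sum>k\<in>UNIV. (1 / ?C) * (\<Sum>c\<in>UNIV. \<Sum>j\<in>UNIV. 1 / lam c k $ j))"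
      by (simp only: k)
    also have "\<dots> = (1 / ?C) * (\<Sum>k\<in>UNIV. \<Sum>c\<in>UNIV. \<Sum>j\<in>UNIV. 1 / lam c k $ j)"
      by (simp only: sum_distrib_left)
    also have "\<dots> = (1 / ?C) * (\<Sum>c\<in>UNIV. \<Sum>k\<in>UNIV. \<Sum>j\<in>UNIV. 1 / lam c k $ j)"
      by (simp only: sum.swap[of _ "UNIV::'k set" "UNIV::'c set"])
    also have "\<dots> = (1 / ?C) * (\<Sum>c\<in>UNIV. T c)"
      by (simp only: Tc)
    finally show ?thesis .
  qed
  have Tc: "T c \<ge> (real CARD('n) * real CARD('k))^2 / T0 c" for c
  proof -
    let ?a = "\<lambda>p::'k\<times>'n. lam c (fst p) $ snd p"
    have am: "real (card (UNIV::('k\<times>'n) set))^2 \<le> sum ?a UNIV * T c"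
      unfolding T_def by (rule am_hm) (auto intro: pos)
    have cardeq: "real (card (UNIV::('k\<times>'n) set)) = real CARD('n) * real CARD('k)"
      by (simp add: card_cartesian_product UNIV_Times_UNIV[symmetric] del: UNIV_Times_UNIV)
    have sa: "sum ?a UNIV = (\<Sum>k\<in>UNIV. trace (Sig I c k))"
      by (simp add: sumlam[symmetric] UNIV_Times_UNIV[symmetric] sum.cartesian_product case_prod_beta del: UNIV_Times_UNIV)
    have sapos: "sum ?a UNIV > 0" by (rule sum_pos) (auto intro: pos)
    have le: "sum ?a UNIV \<le> T0 c"
      unfolding sa T0_def using trs[of I c] trs[of 0 c] dec[of I c] by simp
    have "(real CARD('n) * real CARD('k))^2 \<le> sum ?a UNIV * T c" using am unfolding cardeq by (simp only: mult.commute)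
    also have "\<dots> \<le> T0 c * T c"
    proof (rule mult_right_mono[OF le])
      show "0 \<le> T c" unfolding T_def by (rule sum_nonneg) (simp add: less_imp_le pos)
    qed
    finally have "(real CARD('n) * real CARD('k))^2 \<le> T0 c * T c" .
    moreover have "T0 c > 0" using sapos le by simp
    ultimately show ?thesis by (simp add: field_simps)
  qed
  have "real (CARD('n))^2 * real (CARD('k))^2 / ?C * (\<Sum>c\<in>UNIV. inverse (T0 c))
      = (1 / ?C) * (\<Sum>c\<in>UNIV. (real CARD('n) * real CARD('k))^2 / T0 c)"
  proof -
    have "(\<Sum>c\<in>UNIV. (real CARD('n) * real CARD('k))^2 / T0 c)
        = (real CARD('n) * real CARD('k))^2 * (\<Sum>c\<in>UNIV. inverse (T0 c))"
      by (simp only: sum_distrib_left divide_inverse)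
    then show ?thesis by (simp add: power_mult_distrib)
  qed
  also have "\<dots> \<le> (1 / ?C) * (\<Sum>c\<in>UNIV. T c)"
    using Cpos by (intro mult_left_mono sum_mono Tc) auto
  finally show ?thesis using LHS by (simp add: T0_def)
qed

end
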